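(* Let $T>0$, $0<\eta<T$ and $0<\alpha<\frac{1}{\eta}$. If $y\in C([0,T],[0,\infty))$, then the unique solution $u$ of the problem \[ u''(t)+y(t)=0,\quad t\in(0,T),\qquad u'(0)=0,\quad u(T)=\alpha\int_0^{\eta}u(s)\,ds \] satisfies \[ \min_{t\in[0,T]}u(t)\ge \gamma\|u\|,\qquad\text{where } \gamma=\frac{\alpha\eta(T-\eta)}{T-\alpha\eta^2},\quad \|u\|=\max_{t\in[0,T]}|u(t)|. \] *)

theory Defs
  imports "HOL-Analysis.Analysis"
begin

end

theory Submission
  imports Defs
begin

theorem lemma2p4:
  fixes T \<eta> \<alpha> :: real and y u u' :: "real \<Rightarrow> real"
  assumes "T > 0" and "0 < \<eta>" and "\<eta> < T"
    and "0 < \<alpha>" and "\<alpha> < 1 / \<eta>"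
    and "continuous_on {0..T} y" and "\<forall>t\<in>{0..T}. y t \<ge> 0"
    and "\<forall>t\<in>{0..T}. (u has_real_derivative u' t) (at t within {0..T})"
    and "continuous_on {0..T} u'"
    and "\<forall>t\<in>{0<..<T}. (u' has_real_derivative (- y t)) (at t)"
    and "u' 0 = 0"
    and "u T = \<alpha> * integral {0..\<eta>} u"
  shows "(INF t\<in>{0..T}. u t) \<ge>
           (\<alpha> * \<eta> * (T - \<eta>) / (T - \<alpha> * \<eta>^2)) * (SUP t\<in>{0..T}. \<bar>u t\<bar>)"
proof -
  note A = assms
  have contu: "continuous_on {0..T} u"
    by (rule DERIV_continuous_on) (use A(8) in auto)
  have du: "(u has_real_derivative u' t) (at t)" if "0 < t" "t < T" for t
  proof -
    have "(u has_real_derivative u' t) (at t within {0..T})" using A(8) that by auto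
    thus ?thesis using at_within_Icc_at[of 0 t T] that by simp
  qed
  have u'mono: "u' b \<le> u' a" if h: "0 \<le> a" "a \<le> b" "b \<le> T" for a b
  proof (cases "a = b")
    case False
    hence ab: "a < b" using h by auto
    have "continuous_on {a..b} u'" using A(9) by (rule continuous_on_subset) (use h in auto)
    moreover have "u' differentiable (at x)" if "a < x" "x < b" for x
    proof -
      have "x \<in> {0<..<T}" using that h(1) h(3) by simp
      thus ?thesis unfolding real_differentiable_def using A(10) by blast
    qed
    ultimately obtain l z where z: "a < z" "z < b" "DERIV u' z :> l" "u' b - u' a = (b - a) * l"
      using MVT[OF ab] by blast
    have zin: "z \<in> {0<..<T}" using z(1,2) h by simp
    have "DERIV u' z :> - y z" using A(10) zin by blast
    hence "l = - y z" using DERIV_unique[OF z(3)] by blast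
    moreover have "y z \<ge> 0" using A(7) zin by simp
    ultimately have "l \<le> 0" by simp
    thus ?thesis using z(4) ab mult_nonneg_nonpos[of "b-a" l] by auto
  qed simp
  have u'nonpos: "u' t \<le> 0" if "0 \<le> t" "t \<le> T" for t
    using u'mono[of 0 t] that A(11) by auto
  have mvtu: "\<exists>z. a < z \<and> z < b \<and> u b - u a = (b - a) * u' z" if "0 \<le> a" "a < b" "b \<le> T" for a b
  proof -
    have "continuous_on {a..b} u" using contu by (rule continuous_on_subset) (use that in auto)
    moreover have "u differentiable (at x)" if "a < x" "x < b" for x
      unfolding real_differentiable_def using du[of x] that \<open>0 \<le> a\<close> \<open>b \<le> T\<close> by force
    ultimately obtain l z where z: "a < z" "z < b" "DERIV u z :> l" "u b - u a = (b - a) * l"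
      using MVT[OF \<open>a < b\<close>] by blast
    have "l = u' z" using DERIV_unique[OF z(3) du[of z]] z(1,2) that by linarith
    thus ?thesis using z by auto
  qed
  have umono: "u b \<le> u a" if h: "0 \<le> a" "a \<le> b" "b \<le> T" for a b
  proof (cases "a = b")
    case False
    hence ab: "a < b" using h by auto
    obtain z where z: "a < z" "z < b" "u b - u a = (b - a) * u' z"
      using mvtu[OF h(1) ab h(3)] by blast
    have "u' z \<le> 0" using u'nonpos[of z] z h by auto
    thus ?thesis using z mult_nonneg_nonpos[of "b-a" "u' z"] by auto
  qed simp
  obtain z1 where z1: "0 < z1" "z1 < \<eta>" "u \<eta> - u 0 = \<eta> * u' z1"
    using mvtu[of 0 \<eta>] A(2,3) by auto
  obtain z2 where z2: "\<eta> < z2" "z2 < T" "u T - u \<eta> = (T - \<eta>) * u' z2"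
    using mvtu[of \<eta> T] A(2,3) by auto
  have "u' z2 \<le> u' z1" using u'mono[of z1 z2] z1 z2 by auto
  hence "\<eta> * (T - \<eta>) * u' z2 \<le> \<eta> * (T - \<eta>) * u' z1"
    using A(2,3) by (intro mult_left_mono) auto
  moreover have e2: "u T = u \<eta> + (T - \<eta>) * u' z2" using z2(3) by linarith
  moreover have e1: "u 0 = u \<eta> - \<eta> * u' z1" using z1(3) by linarith
  moreover have "\<eta> * u T = \<eta> * u \<eta> + \<eta> * (T - \<eta>) * u' z2"
    unfolding e2 by (simp add: algebra_simps)
  moreover have "(T - \<eta>) * u 0 = (T - \<eta>) * u \<eta> - \<eta> * (T - \<eta>) * u' z1"
    unfolding e1 by (simp add: algebra_simps)
  moreover have "T * u \<eta> = \<eta> * u \<eta> + (T - \<eta>) * u \<eta>" by (simp add: algebra_simps)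
  ultimately have conc: "\<eta> * u T + (T - \<eta>) * u 0 \<le> T * u \<eta>" by linarith
  have intu: "u integrable_on {0..\<eta>}"
    by (rule integrable_continuous_interval, rule continuous_on_subset[OF contu]) (use A(2,3) in auto)
  have "integral {0..\<eta>} (\<lambda>x. u \<eta>) \<le> integral {0..\<eta>} u"
    by (rule integral_le[OF _ intu]) (use umono A(2,3) in auto)
  hence int: "\<eta> * u \<eta> \<le> integral {0..\<eta>} u" using A(2) by simp
  have ae: "\<alpha> * \<eta> < 1" using A(2) A(5) by (simp add: field_simps)
  have ae2: "\<alpha> * \<eta>^2 < T"
  proof -
    have "\<alpha> * \<eta>^2 = (\<alpha> * \<eta>) * \<eta>" by (simp add: power2_eq_square)
    also have "\<dots> < 1 * \<eta>" using ae A(2) by (intro mult_strict_right_mono) auto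
    finally show ?thesis using A(3) by simp
  qed
  have s1: "\<alpha> * (\<eta> * u \<eta>) \<le> u T"
    using mult_left_mono[OF int, of \<alpha>] A(12) A(4) by simp
  have s2: "T * (\<alpha> * (\<eta> * u \<eta>)) \<le> T * u T"
    using mult_left_mono[OF s1, of T] A(1) by simp
  have s3: "\<alpha> * \<eta> * (\<eta> * u T + (T - \<eta>) * u 0) \<le> \<alpha> * \<eta> * (T * u \<eta>)"
    using mult_left_mono[OF conc, of "\<alpha> * \<eta>"] A(2) A(4) by simp
  have s4: "\<alpha> * \<eta> * (T * u \<eta>) = T * (\<alpha> * (\<eta> * u \<eta>))" by (simp add: mult_ac)
  have e1: "(T - \<alpha> * \<eta>^2) * u T - \<alpha> * \<eta> * (T - \<eta>) * u 0
      = T * u T - \<alpha> * \<eta> * (\<eta> * u T + (T - \<eta>) * u 0)"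
    by (simp add: algebra_simps power2_eq_square)
  have key: "\<alpha> * \<eta> * (T - \<eta>) * u 0 \<le> (T - \<alpha> * \<eta>^2) * u T"
    using s2 s3 s4 e1 by linarith
  have u0T: "u T \<le> u 0" using umono[of 0 T] A(1) by auto
  have s5: "\<alpha> * \<eta> * (T - \<eta>) * u T \<le> \<alpha> * \<eta> * (T - \<eta>) * u 0"
    using u0T A(2,3,4) by (intro mult_left_mono) auto
  have e2: "T * (1 - \<alpha> * \<eta>) * u T = ((T - \<alpha> * \<eta>^2) * u T - \<alpha> * \<eta> * (T - \<eta>) * u 0)
       + (\<alpha> * \<eta> * (T - \<eta>) * u 0 - \<alpha> * \<eta> * (T - \<eta>) * u T)"
    by (simp add: algebra_simps power2_eq_square)
  have s6: "0 \<le> (T * (1 - \<alpha> * \<eta>)) * u T" using e2 key s5 by linarith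
  have pos: "0 < T * (1 - \<alpha> * \<eta>)" using A(1) ae by simp
  have uT: "u T \<ge> 0"
  proof (rule ccontr)
    assume "\<not> u T \<ge> 0"
    hence "u T < 0" by simp
    hence "(T * (1 - \<alpha> * \<eta>)) * u T < 0" by (rule mult_pos_neg[OF pos])
    thus False using s6 by linarith
  qed
  define D where "D = T - \<alpha> * \<eta>^2"
  have D0: "D > 0" using ae2 by (simp add: D_def)
  define g where "g = \<alpha> * \<eta> * (T - \<eta>) / D"
  have g0: "g \<ge> 0" using A(2,3,4) D0 by (simp add: g_def)
  have gu: "g * u 0 \<le> u T"
  proof -
    have "g * u 0 = (\<alpha> * \<eta> * (T - \<eta>) * u 0) / D" by (simp add: g_def)
    also have "\<dots> \<le> u T" using key D0 by (simp add: pos_divide_le_eq D_def mult.commute)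
    finally show ?thesis .
  qed
  have inf: "u T \<le> (INF t\<in>{0..T}. u t)"
    by (rule cINF_greatest) (use A(1) umono in auto)
  have sup: "(SUP t\<in>{0..T}. \<bar>u t\<bar>) \<le> u 0"
  proof (rule cSUP_least)
    fix t assume t: "t \<in> {0..T}"
    have "u t \<le> u 0" "u T \<le> u t" using umono[of 0 t] umono[of t T] t by auto
    thus "\<bar>u t\<bar> \<le> u 0" using uT by auto
  qed (use A(1) in auto)
  have "g * (SUP t\<in>{0..T}. \<bar>u t\<bar>) \<le> g * u 0" using sup g0 by (rule mult_left_mono)
  thus ?thesis using gu inf unfolding g_def D_def by linarith
qed

end
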